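(* Let $\mu,\nu$ be partitions of $n$ with $p(\mu)\le p(\nu)$. Then: (1) for every $0\le s\le p(\nu)-p(\mu)$, \[ \sum_{\mu':\,|\mu'|=n,\ p(\mu')=p(\mu)+s} t^\mu_{\mu'}\,t^{\mu'}_\nu=\binom{p(\nu)-p(\mu)}{s}t^\mu_\nu; \] (2) for integers $s_1,\dots,s_{k-1}\ge0$ with $\sum_{i=1}^{k-1}s_i\le p(\nu)-p(\mu)$, \[ \sum_{\substack{\mu_1,\dots,\mu_{k-1}\text{ partitions of }n:\\ p(\mu_i)=p(\mu_{i-1})+s_i}} t^{\mu}_{\mu_1}t^{\mu_1}_{\mu_2}\cdots t^{\mu_{k-1}}_{\nu}=\frac{(p(\nu)-p(\mu))!}{s_1!\cdots s_{k-1}!\,\big(p(\nu)-p(\mu)-\sum_i s_i\big)!}\,t^\mu_\nu, \] where $\mu_0:=\mu$.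
   Context: Let $\mathbb H$ be the upper half plane and $\mathcal O(\mathbb H)$ its ring of holomorphic functions. Let $V=\mathbb C[a_{-1},a_{-2},\dots,b_0,b_{-1},\dots]$ be the vacuum module of the Heisenberg Lie algebra $[a_m,b_n]=\delta_{m,-n}C$ (with $a_m1=0$ for $m\ge0$, $b_n1=0$ for $n>0$, $C=1$), a vertex algebra with fields $a(z)=\sum a_nz^{-n-1}$, $b(z)=\sum b_nz^{-n}$. Let $\mathscr D^{ch}(\mathbb H)=V\otimes_{\mathbb C[b_0]}\mathcal O(\mathbb H)$ ($b_0\mapsto\tau$, $b=b_0$), with $Y(f,z)=\sum_{i\ge0}\frac{f^{(i)}(b)}{i!}(\sum_{n\ne0}b_nz^{-n})^i$ for $f\in\mathcal O(\mathbb H)$. For a partition $\mu=(\mu_{(1)}\ge\dots\ge\mu_{(d)}\ge1)$, $p(\mu)=d$, $|\mu|=\sum\mu_{(i)}$ and $b_{-\mu}=b_{-\mu_{(1)}}\cdots b_{-\mu_{(d)}}$. $SL(2,\mathbb R)$ acts on the right by vertex algebra automorphisms $\pi(g)$, integrating the zero modes of $E=-a_{-1}$, $F=a_{-1}b_0^2+2b_{-1}$, $H=-2a_{-1}b_0$ via $\pi(e^x)=\exp(-x_{(0)})$; for $g=\begin{pmatrix}\alpha&\beta\\\gamma&\delta\end{pmatrix}$, $\pi(g)a_{-1}=a_{-1}(\gamma b+\delta)^2+2\gamma^2b_{-1}$ and $\pi(g)f(b)=f(\frac{\alpha b+\beta}{\gamma b+\delta})$. For each partition $\mu$ there are unique constants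 $t^\mu_\nu$ (for partitions $\nu$ with $|\nu|=|\mu|$, $p(\nu)\ge p(\mu)$), independent of $g$, such that for all $g\in SL(2,\mathbb R)$ \[ \pi(g)(b_{-\mu}\cdot1)=\sum_{\nu:\,p(\nu)\ge p(\mu)}t^\mu_\nu(-\gamma)^{p(\nu)-p(\mu)}\,b_{-\nu}\,(\gamma b+\delta)^{-p(\mu)-p(\nu)}. \] *)

theory Defs
  imports Complex_Main "HOL-Library.Multiset"
begin

text \<open>A partition of n: a non-increasing list of positive naturals summing to n.
  p(mu) = length mu, |mu| = sum_list mu.\<close>
definition is_partition :: "nat \<Rightarrow> nat list \<Rightarrow> bool" where
  "is_partition n xs \<longleftrightarrow> sorted_wrt (\<ge>) xs \<and> (\<forall>x\<in>set xs. 0 < x) \<and> sum_list xs = n"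

definition is_composition :: "nat \<Rightarrow> nat list \<Rightarrow> bool" where
  "is_composition m xs \<longleftrightarrow> (\<forall>x\<in>set xs. 0 < x) \<and> sum_list xs = m"

text \<open>The constants t^mu_nu: coefficient of b_{-nu} in the expansion of
  pi(g)(b_{-mu} 1) = prod_j [z^{mu_j}] phi(b + sum_{m>=1} b_{-m} z^m),
  phi(x) = (alpha x + beta)/(gamma x + delta), using
  phi^(i)(x)/i! = (-gamma)^(i-1) (gamma x + delta)^(-i-1).
  Expanding, each part mu_j is replaced by a composition of mu_j; t^mu_nu counts
  the tuples of compositions whose combined multiset of parts is nu.\<close>
definition tcoef :: "nat list \<Rightarrow> nat list \<Rightarrow> nat" where
  "tcoef mu nu = card {cs. length cs = length mu \<and>
      (\<forall>j<length mu. is_composition (mu ! j) (cs ! j)) \<and> mset (concat cs) = mset nu}"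

fun tchain :: "nat list \<Rightarrow> nat list list \<Rightarrow> nat list \<Rightarrow> nat" where
  "tchain mu [] nu = tcoef mu nu"
| "tchain mu (m # ms) nu = tcoef mu m * tchain m ms nu"

end

theory Submission
  imports Defs "HOL-Computational_Algebra.Polynomial"
begin

definition comps :: "nat \<Rightarrow> nat list set" where
  "comps a = {c. is_composition a c}"

lemma length_le_sum_pos: "(\<forall>x\<in>set c. 0 < (x::nat)) \<Longrightarrow> length c \<le> sum_list c"
  by (induction c) auto

lemma finite_comps: "finite (comps a)"
proof -
  have "comps a \<subseteq> {xs. set xs \<subseteq> {0..a} \<and> length xs \<le> a}"
  proof
    fix c assume "c \<in> comps a"
    then have p: "\<forall>x\<in>set c. 0 < x" and s: "sum_list c = a"
      by (auto simp: comps_def is_composition_def)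
    have "set c \<subseteq> {0..a}" using s member_le_sum_list by fastforce
    moreover have "length c \<le> a" using length_le_sum_pos[OF p] s by simp
    ultimately show "c \<in> {xs. set xs \<subseteq> {0..a} \<and> length xs \<le> a}" by simp
  qed
  then show ?thesis using finite_lists_length_le[of "{0..a}" a] finite_subset by blast
qed

lemma comps_nonempty: "c \<in> comps a \<Longrightarrow> 0 < a \<Longrightarrow> c \<noteq> []"
  by (auto simp: comps_def is_composition_def)

lemma finite_submsets: "finite {N1. N1 \<subseteq># (N::'a multiset)}"
proof -
  have "{N1. N1 \<subseteq># N} \<subseteq> mset ` {xs. set xs \<subseteq> set_mset N \<and> length xs \<le> size N}"
  proof
    fix N1 assume "N1 \<in> {N1. N1 \<subseteq># N}"
    then have h: "N1 \<subseteq># N" by simp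
    obtain xs where xs: "mset xs = N1" using ex_mset by blast
    have "set xs \<subseteq> set_mset N" using h xs by (metis mset_subset_eqD set_mset_mset subsetI)
    moreover have "length xs \<le> size N" using h xs by (metis size_mset size_mset_mono)
    ultimately show "N1 \<in> mset ` {xs. set xs \<subseteq> set_mset N \<and> length xs \<le> size N}" using xs by blast
  qed
  then show ?thesis by (rule finite_subset) (simp add: finite_lists_length_le)
qed

definition DD :: "nat list \<Rightarrow> nat multiset \<Rightarrow> nat list list set" where
  "DD c N = {ds. length ds = length c \<and> (\<forall>j<length c. is_composition (c!j) (ds!j)) \<and> mset (concat ds) = N}"

definition Tr :: "nat list \<Rightarrow> nat multiset \<Rightarrow> nat" where
  "Tr c N = card (DD c N)"

lemma tcoef_Tr: "tcoef mu nu = Tr mu (mset nu)"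
  by (simp add: tcoef_def Tr_def DD_def)

lemma DD_Nil: "DD [] N = (if N = {#} then {[]} else {})"
  by (auto simp: DD_def)

lemma DD_Cons: "DD (a#c) N = (\<Union>f\<in>{f\<in>comps a. mset f \<subseteq># N}. (#) f ` DD c (N - mset f))"
proof (intro set_eqI iffI)
  fix ds assume "ds \<in> DD (a#c) N"
  then obtain f ds' where ds: "ds = f # ds'" and l: "length ds' = length c"
    and h: "\<forall>j<Suc (length c). is_composition ((a#c)!j) ((f#ds')!j)"
    and m: "mset f + mset (concat ds') = N"
    unfolding DD_def by (auto simp: length_Suc_conv)
  have "f \<in> comps a" using h[rule_format, of 0] by (simp add: comps_def)
  moreover have "mset f \<subseteq># N" using m by auto
  moreover have "ds' \<in> DD c (N - mset f)"
  proof -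
    have "\<forall>j<length c. is_composition (c!j) (ds'!j)"
    proof (intro allI impI)
      fix j assume "j < length c"
      then show "is_composition (c!j) (ds'!j)" using h[rule_format, of "Suc j"] by simp
    qed
    then show ?thesis unfolding DD_def using l m by auto
  qed
  ultimately show "ds \<in> (\<Union>f\<in>{f\<in>comps a. mset f \<subseteq># N}. (#) f ` DD c (N - mset f))"
    using ds by blast
next
  fix ds assume "ds \<in> (\<Union>f\<in>{f\<in>comps a. mset f \<subseteq># N}. (#) f ` DD c (N - mset f))"
  then obtain f ds' where ds: "ds = f # ds'" and f: "f \<in> comps a" "mset f \<subseteq># N"
    and d: "ds' \<in> DD c (N - mset f)" by blast
  show "ds \<in> DD (a#c) N"
    using d f unfolding DD_def ds comps_def
    by (auto simp: nth_Cons split: nat.splits)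
qed

lemma finite_DD: "finite (DD c N)"
proof (induction c arbitrary: N)
  case Nil then show ?case by (simp add: DD_Nil)
next
  case (Cons a c) then show ?case by (simp add: DD_Cons finite_comps)
qed

lemma Tr_Nil: "Tr [] N = (if N = {#} then 1 else 0)"
  by (simp add: Tr_def DD_Nil)

lemma Tr_Cons: "Tr (a#c) N = (\<Sum>f\<in>{f\<in>comps a. mset f \<subseteq># N}. Tr c (N - mset f))"
  unfolding Tr_def DD_Cons
  by (subst card_UN_disjoint) (auto simp: finite_comps finite_DD card_image)


lemma sum_shift_sub:
  fixes h :: "nat multiset \<Rightarrow> 'b::comm_monoid_add"
  assumes "F \<subseteq># N"
  shows "(\<Sum>N1\<in>{N1. N1 \<subseteq># N - F}. h N1) = (\<Sum>N1\<in>{N1. N1 \<subseteq># N \<and> F \<subseteq># N1}. h (N1 - F))"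
proof (rule sum.reindex_bij_witness[of _ "\<lambda>N1. N1 - F" "\<lambda>N1. F + N1"])
  fix N1 assume "N1 \<in> {N1. N1 \<subseteq># N \<and> F \<subseteq># N1}"
  then have h1: "N1 \<subseteq># N" "F \<subseteq># N1" by auto
  show "F + (N1 - F) = N1" using h1(2) by (simp add: subset_mset.add_diff_inverse)
  have "N1 - F \<subseteq># N - F" using h1
    by (metis mset_subset_eq_multiset_union_diff_commute subset_mset.le_iff_add)
  then show "N1 - F \<in> {N1. N1 \<subseteq># N - F}" by simp
next
  fix N1 assume "N1 \<in> {N1. N1 \<subseteq># N - F}"
  then have h1: "N1 \<subseteq># N - F" by simp
  show "F + N1 - F = N1" by simp
  show "h (F + N1 - F) = h N1" by simp
  have "F + N1 \<subseteq># N" using h1 assms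
    by (metis add.commute subset_mset.le_diff_conv2)
  then show "F + N1 \<in> {N1. N1 \<subseteq># N \<and> F \<subseteq># N1}" by simp
qed

lemma Tr_append:
  "Tr (x @ y) N = (\<Sum>N1\<in>{N1. N1 \<subseteq># N}. Tr x N1 * Tr y (N - N1))"
proof (induction x arbitrary: N)
  case Nil
  have "(\<Sum>N1\<in>{N1. N1 \<subseteq># N}. Tr [] N1 * Tr y (N - N1)) = (\<Sum>N1\<in>{N1. N1 \<subseteq># N}. if N1 = {#} then Tr y (N - N1) else 0)"
    by (rule sum.cong[OF refl]) (simp add: Tr_Nil)
  also have "\<dots> = Tr y N" by (subst sum.delta) (simp_all add: finite_submsets)
  finally show ?case by simp
next
  case (Cons a x)
  have "Tr ((a#x) @ y) N = (\<Sum>f\<in>{f\<in>comps a. mset f \<subseteq># N}. Tr (x@y) (N - mset f))"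
    by (simp only: append_Cons Tr_Cons)
  also have "\<dots> = (\<Sum>f\<in>comps a. if mset f \<subseteq># N then Tr (x@y) (N - mset f) else 0)"
    by (simp add: sum.inter_filter finite_comps)
  also have "\<dots> = (\<Sum>f\<in>comps a. \<Sum>N1\<in>{N1. N1 \<subseteq># N \<and> mset f \<subseteq># N1}. Tr x (N1 - mset f) * Tr y (N - N1))"
  proof (rule sum.cong[OF refl])
    fix f assume "f \<in> comps a"
    show "(if mset f \<subseteq># N then Tr (x@y) (N - mset f) else 0) =
      (\<Sum>N1\<in>{N1. N1 \<subseteq># N \<and> mset f \<subseteq># N1}. Tr x (N1 - mset f) * Tr y (N - N1))"
    proof (cases "mset f \<subseteq># N")
      case True
      have "Tr (x@y) (N - mset f) = (\<Sum>N1\<in>{N1. N1 \<subseteq># N - mset f}. Tr x N1 * Tr y (N - mset f - N1))"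
        by (rule Cons.IH)
      also have "\<dots> = (\<Sum>N1\<in>{N1. N1 \<subseteq># N \<and> mset f \<subseteq># N1}. Tr x (N1 - mset f) * Tr y (N - mset f - (N1 - mset f)))"
        by (rule sum_shift_sub[OF True])
      also have "\<dots> = (\<Sum>N1\<in>{N1. N1 \<subseteq># N \<and> mset f \<subseteq># N1}. Tr x (N1 - mset f) * Tr y (N - N1))"
      proof (rule sum.cong[OF refl])
        fix N1 assume "N1 \<in> {N1. N1 \<subseteq># N \<and> mset f \<subseteq># N1}"
        then have "mset f \<subseteq># N1" by simp
        then have "N - mset f - (N1 - mset f) = N - N1"
          by (simp only: diff_diff_add_mset subset_mset.add_diff_inverse)
        then show "Tr x (N1 - mset f) * Tr y (N - mset f - (N1 - mset f)) = Tr x (N1 - mset f) * Tr y (N - N1)"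
          by simp
      qed
      finally show ?thesis using True by simp
    next
      case False
      then have "{N1. N1 \<subseteq># N \<and> mset f \<subseteq># N1} = {}" using subset_mset.order_trans by blast
      then show ?thesis using False by (simp only: if_False sum.empty)
    qed
  qed
  also have "\<dots> = (\<Sum>N1\<in>{N1. N1 \<subseteq># N}. \<Sum>f\<in>{f\<in>comps a. mset f \<subseteq># N1}. Tr x (N1 - mset f) * Tr y (N - N1))"
  proof -
    have "(\<Sum>f\<in>comps a. \<Sum>N1\<in>{N1 \<in> {N1. N1 \<subseteq># N}. mset f \<subseteq># N1}. Tr x (N1 - mset f) * Tr y (N - N1))
      = (\<Sum>N1\<in>{N1. N1 \<subseteq># N}. \<Sum>f\<in>{f\<in>comps a. mset f \<subseteq># N1}. Tr x (N1 - mset f) * Tr y (N - N1))"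
      by (rule sum.swap_restrict) (simp_all add: finite_comps finite_submsets)
    moreover have "\<And>f. {N1 \<in> {N1. N1 \<subseteq># N}. mset f \<subseteq># N1} = {N1. N1 \<subseteq># N \<and> mset f \<subseteq># N1}"
      by blast
    ultimately show ?thesis by simp
  qed
  also have "\<dots> = (\<Sum>N1\<in>{N1. N1 \<subseteq># N}. Tr (a#x) N1 * Tr y (N - N1))"
    by (simp only: Tr_Cons sum_distrib_right)
  finally show ?case .
qed

lemma conv_comm:
  fixes f g :: "nat multiset \<Rightarrow> nat"
  shows "(\<Sum>N1\<in>{N1. N1 \<subseteq># N}. f N1 * g (N - N1)) = (\<Sum>N1\<in>{N1. N1 \<subseteq># N}. g N1 * f (N - N1))"
proof (rule sum.reindex_bij_witness[of _ "\<lambda>N1. N - N1" "\<lambda>N1. N - N1"])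
  fix a assume a: "a \<in> {N1. N1 \<subseteq># N}"
  then have e: "N - (N - a) = a" by (simp add: subset_mset.diff_diff_right)
  show "N - (N - a) = a" by (fact e)
  show "N - (N - a) = a" by (fact e)
  show "N - a \<in> {N1. N1 \<subseteq># N}" by simp
  show "N - a \<in> {N1. N1 \<subseteq># N}" by simp
  show "g (N - a) * f (N - (N - a)) = f a * g (N - a)" by (simp add: e)
qed

lemma Tr_append_comm: "Tr (x @ y) N = Tr (y @ x) N"
  by (simp add: Tr_append conv_comm)

lemma Tr_perm: "mset x = mset x' \<Longrightarrow> Tr x N = Tr x' N"
proof (induction x arbitrary: x' N)
  case Nil then show ?case by simp
next
  case (Cons a xs)
  then have "a \<in> set x'" by (metis list.set_intros(1) set_mset_mset)
  then obtain ys zs where x': "x' = ys @ a # zs" by (meson split_list)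
  have "Tr x' N = Tr ((a # zs) @ ys) N" unfolding x' by (rule Tr_append_comm)
  also have "\<dots> = Tr (a # (zs @ ys)) N" by simp
  also have "\<dots> = Tr (a # xs) N"
    unfolding Tr_Cons
    by (rule sum.cong[OF refl], rule Cons.IH[symmetric]) (use Cons.prems x' in auto)
  finally show ?case by simp
qed

lemma Tr_size: "(\<forall>x\<in>set c. 0 < x) \<Longrightarrow> Tr c N \<noteq> 0 \<Longrightarrow> length c \<le> size N"
proof (induction c arbitrary: N)
  case Nil then show ?case by simp
next
  case (Cons a c)
  have "(\<Sum>f\<in>{f\<in>comps a. mset f \<subseteq># N}. Tr c (N - mset f)) \<noteq> 0"
    using Cons.prems(2) unfolding Tr_Cons .
  then obtain f where f0: "f \<in> {f\<in>comps a. mset f \<subseteq># N}" and t: "Tr c (N - mset f) \<noteq> 0"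
    by (rule sum.not_neutral_contains_not_neutral)
  from f0 have f: "f \<in> comps a" "mset f \<subseteq># N" by auto
  have "f \<noteq> []" using comps_nonempty[OF f(1)] Cons.prems(1) by simp
  then have "size (mset f) \<ge> 1" by (cases f) auto
  moreover have "length c \<le> size (N - mset f)" using Cons.IH[OF _ t] Cons.prems(1) by simp
  moreover have "size (N - mset f) = size N - size (mset f)" using f(2) by (simp add: size_Diff_submset)
  moreover have "size (mset f) \<le> size N" using size_mset_mono[OF f(2)] by simp
  ultimately show ?case by simp
qed

lemma Tr_single: "Tr [a] N = card {d\<in>comps a. mset d = N}"
proof -
  have "Tr [a] N = (\<Sum>f\<in>{f\<in>comps a. mset f \<subseteq># N}. if N - mset f = {#} then 1 else 0)"
    by (simp add: Tr_Cons Tr_Nil)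
  also have "\<dots> = card {f\<in>{f\<in>comps a. mset f \<subseteq># N}. N - mset f = {#}}"
    by (subst sum.inter_filter[symmetric]) (auto simp: finite_comps)
  also have "{f\<in>{f\<in>comps a. mset f \<subseteq># N}. N - mset f = {#}} = {d\<in>comps a. mset d = N}"
    by (auto simp: subset_mset.antisym Diff_eq_empty_iff_mset)
  finally show ?thesis .
qed


lemma sum_list_concat_nat: "sum_list (concat xs) = sum_list (map sum_list (xs :: nat list list))"
  by (induction xs) auto

definition CS :: "nat list \<Rightarrow> nat list list set" where
  "CS c = {ds. length ds = length c \<and> (\<forall>j<length c. is_composition (c!j) (ds!j))}"

lemma CS_char: "ds \<in> CS c \<longleftrightarrow> c = map sum_list ds \<and> (\<forall>b\<in>set ds. \<forall>x\<in>set b. 0 < x)"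
proof
  assume h: "ds \<in> CS c"
  then have l: "length ds = length c" and j: "\<forall>j<length c. is_composition (c!j) (ds!j)"
    by (auto simp: CS_def)
  have "c = map sum_list ds"
    by (rule nth_equalityI) (use l j in \<open>auto simp: is_composition_def\<close>)
  moreover have "\<forall>b\<in>set ds. \<forall>x\<in>set b. 0 < x"
    using l j by (auto simp: in_set_conv_nth is_composition_def) (metis nth_mem)
  ultimately show "c = map sum_list ds \<and> (\<forall>b\<in>set ds. \<forall>x\<in>set b. 0 < x)" by blast
next
  assume "c = map sum_list ds \<and> (\<forall>b\<in>set ds. \<forall>x\<in>set b. 0 < x)"
  then show "ds \<in> CS c" by (auto simp: CS_def is_composition_def)
qed

lemma DD_CS: "DD c N = {ds \<in> CS c. mset (concat ds) = N}"
  by (auto simp: DD_def CS_def)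

lemma DD_char: "ds \<in> DD c N \<longleftrightarrow> c = map sum_list ds \<and> (\<forall>b\<in>set ds. \<forall>x\<in>set b. 0 < x) \<and> mset (concat ds) = N"
  by (simp add: DD_CS CS_char)

lemma comps_char: "c \<in> comps a \<longleftrightarrow> (\<forall>x\<in>set c. 0 < x) \<and> sum_list c = a"
  by (simp add: comps_def is_composition_def)

lemma CS_Cons: "CS (a#\<mu>) = (\<lambda>(c,cs). c#cs) ` (comps a \<times> CS \<mu>)"
proof (intro set_eqI iffI)
  fix ds assume "ds \<in> CS (a#\<mu>)"
  then have h: "a#\<mu> = map sum_list ds" "\<forall>b\<in>set ds. \<forall>x\<in>set b. 0 < x" by (auto simp: CS_char)
  then obtain c cs where ds: "ds = c # cs" by (cases ds) auto
  have "c \<in> comps a" using h unfolding ds by (auto simp: comps_char)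
  moreover have "cs \<in> CS \<mu>" using h unfolding ds by (auto simp: CS_char)
  ultimately show "ds \<in> (\<lambda>(c,cs). c#cs) ` (comps a \<times> CS \<mu>)" using ds by auto
next
  fix ds assume "ds \<in> (\<lambda>(c,cs). c#cs) ` (comps a \<times> CS \<mu>)"
  then show "ds \<in> CS (a#\<mu>)" by (auto simp: CS_char comps_char)
qed

lemma finite_CS: "finite (CS \<mu>)"
proof (induction \<mu>)
  case Nil
  have "CS [] = {[]}" by (auto simp: CS_def)
  then show ?case by simp
next
  case (Cons a \<mu>) then show ?case by (simp add: CS_Cons finite_comps)
qed

lemma length_concat_CS:
  assumes "cs \<in> CS \<mu>" "\<forall>x\<in>set \<mu>. 0 < x"
  shows "length \<mu> \<le> length (concat cs)"
proof -
  have h: "\<mu> = map sum_list cs" using assms(1) by (simp add: CS_char)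
  have "\<forall>b\<in>set cs. b \<noteq> []" using assms(2) unfolding h by auto
  then have "length cs \<le> length (concat cs)"
    by (induction cs) (auto, metis add_le_mono le_add2 length_0_conv less_one linorder_not_le not_less_eq_eq plus_1_eq_Suc)
  then show ?thesis using h by simp
qed

definition Grp :: "nat list \<Rightarrow> nat list list set" where
  "Grp d = {ds. concat ds = d \<and> (\<forall>b\<in>set ds. b \<noteq> [])}"

lemma Grp_single: "Grp [x] = {[[x]]}"
proof (intro set_eqI iffI)
  fix ds assume "ds \<in> Grp [x]"
  then have h: "concat ds = [x]" "\<forall>b\<in>set ds. b \<noteq> []" by (auto simp: Grp_def)
  then show "ds \<in> {[[x]]}"
  proof (cases ds)
    case Nil then show ?thesis using h by simp
  next
    case (Cons b rest)
    then have "b \<noteq> []" using h by simp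
    then have "b = [x] \<and> concat rest = []" using h Cons by (cases b) auto
    then have "rest = []" using h Cons by (auto simp: concat_eq_Nil_conv) 
    then show ?thesis using \<open>b = [x] \<and> _\<close> Cons by simp
  qed
qed (auto simp: Grp_def)

lemma Grp_Cons:
  assumes "d \<noteq> []"
  shows "Grp (x#d) = (\<lambda>ds. [x]#ds) ` Grp d \<union> (\<lambda>ds. (x # hd ds) # tl ds) ` Grp d"
proof (intro set_eqI iffI)
  fix ds assume "ds \<in> Grp (x#d)"
  then have h: "concat ds = x#d" "\<forall>b\<in>set ds. b \<noteq> []" by (auto simp: Grp_def)
  then obtain b rest where ds: "ds = b # rest" by (cases ds) auto
  then have "b \<noteq> []" using h by simp
  then obtain y b' where b: "b = y # b'" by (cases b) auto
  have y: "y = x" and cc: "b' @ concat rest = d" using h ds b by auto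
  show "ds \<in> (\<lambda>ds. [x]#ds) ` Grp d \<union> (\<lambda>ds. (x # hd ds) # tl ds) ` Grp d"
  proof (cases "b' = []")
    case True
    then have "rest \<in> Grp d" using cc h ds by (auto simp: Grp_def)
    then show ?thesis using ds b y True by blast
  next
    case False
    then have "b' # rest \<in> Grp d" using cc h ds by (auto simp: Grp_def)
    moreover have "ds = (\<lambda>ds. (x # hd ds) # tl ds) (b' # rest)" using ds b y by simp
    ultimately show ?thesis by blast
  qed
next
  fix ds assume "ds \<in> (\<lambda>ds. [x]#ds) ` Grp d \<union> (\<lambda>ds. (x # hd ds) # tl ds) ` Grp d"
  then show "ds \<in> Grp (x#d)"
  proof
    assume "ds \<in> (\<lambda>ds. [x]#ds) ` Grp d" then show ?thesis by (auto simp: Grp_def)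
  next
    assume "ds \<in> (\<lambda>ds. (x # hd ds) # tl ds) ` Grp d"
    then obtain es where es: "es \<in> Grp d" and ds: "ds = (x # hd es) # tl es" by blast
    have "es \<noteq> []" using es assms by (auto simp: Grp_def)
    then obtain e es' where ees: "es = e # es'" by (cases es) auto
    have "concat es = d" "\<forall>b\<in>set es. b \<noteq> []" using es by (auto simp: Grp_def)
    then show ?thesis using ds ees by (auto simp: Grp_def)
  qed
qed

lemma Grp_poly:
  "d \<noteq> [] \<Longrightarrow> finite (Grp d) \<and> (\<Sum>ds\<in>Grp d. monom (1::nat) (length ds - 1)) = [:1,1:] ^ (length d - 1)"
proof (induction d)
  case Nil then show ?case by simp
next
  case (Cons x d)
  show ?case
  proof (cases "d = []")
    case True then show ?thesis by (simp add: Grp_single monom_0 one_pCons)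
  next
    case False
    with Cons.IH have fin: "finite (Grp d)"
      and S: "(\<Sum>ds\<in>Grp d. monom (1::nat) (length ds - 1)) = [:1,1:] ^ (length d - 1)" by auto
    have ne: "\<And>es. es \<in> Grp d \<Longrightarrow> es \<noteq> []" using False by (auto simp: Grp_def)
    have inj1: "inj_on (\<lambda>ds. [x]#ds) (Grp d)" by (auto simp: inj_on_def)
    have inj2: "inj_on (\<lambda>ds. (x # hd ds) # tl ds) (Grp d)"
    proof (rule inj_onI)
      fix u v assume u: "u \<in> Grp d" and v: "v \<in> Grp d" and e: "(x # hd u) # tl u = (x # hd v) # tl v"
      have "u = hd u # tl u" "v = hd v # tl v" using ne[OF u] ne[OF v] by simp_all
      then show "u = v" using e by (metis list.inject)
    qed
    have disj: "(\<lambda>ds. [x]#ds) ` Grp d \<inter> (\<lambda>ds. (x # hd ds) # tl ds) ` Grp d = {}"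
    proof (rule ccontr)
      assume "\<not> ?thesis"
      then obtain u v where u: "u \<in> Grp d" and v: "v \<in> Grp d" and e: "[x]#u = (x # hd v) # tl v" by blast
      have "hd v \<noteq> []" using v ne[OF v] by (auto simp: Grp_def)
      then show False using e by simp
    qed
    have m1: "\<And>ds. ds \<in> Grp d \<Longrightarrow> monom (1::nat) (length ([x]#ds) - 1) = monom 1 1 * monom 1 (length ds - 1)"
      using ne by (simp add: mult_monom)
    have m2: "\<And>ds. ds \<in> Grp d \<Longrightarrow> monom (1::nat) (length ((x # hd ds) # tl ds) - 1) = monom 1 (length ds - 1)"
      using ne by simp
    have "(\<Sum>ds\<in>Grp (x#d). monom (1::nat) (length ds - 1))
        = (\<Sum>ds\<in>(\<lambda>ds. [x]#ds) ` Grp d. monom (1::nat) (length ds - 1))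
          + (\<Sum>ds\<in>(\<lambda>ds. (x # hd ds) # tl ds) ` Grp d. monom (1::nat) (length ds - 1))"
      unfolding Grp_Cons[OF False] by (rule sum.union_disjoint) (use fin disj in auto)
    also have "\<dots> = (\<Sum>ds\<in>Grp d. monom 1 1 * monom (1::nat) (length ds - 1)) + (\<Sum>ds\<in>Grp d. monom (1::nat) (length ds - 1))"
    proof -
      have A1: "(\<Sum>ds\<in>(\<lambda>ds. [x]#ds) ` Grp d. monom (1::nat) (length ds - 1)) = (\<Sum>ds\<in>Grp d. monom 1 1 * monom (1::nat) (length ds - 1))"
        unfolding sum.reindex[OF inj1] comp_def by (rule sum.cong[OF refl], rule m1)
      have A2: "(\<Sum>ds\<in>(\<lambda>ds. (x # hd ds) # tl ds) ` Grp d. monom (1::nat) (length ds - 1)) = (\<Sum>ds\<in>Grp d. monom (1::nat) (length ds - 1))"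
        unfolding sum.reindex[OF inj2] comp_def by (rule sum.cong[OF refl], rule m2)
      show ?thesis by (simp only: A1 A2)
    qed
    also have "\<dots> = (monom 1 1 + 1) * [:1,1:] ^ (length d - 1)"
      unfolding sum_distrib_left[symmetric] S by (simp add: distrib_right)
    also have "monom 1 1 + 1 = [:1::nat,1:]"
      by (simp add: monom_altdef one_pCons)
    also have "[:1::nat,1:] * [:1,1:] ^ (length d - 1) = [:1,1:] ^ (length (x#d) - 1)"
      using False by (cases d) auto
    finally show ?thesis using fin by (simp add: Grp_Cons[OF False])
  qed
qed


lemma monom_card: "finite D \<Longrightarrow> monom (card D) k = (\<Sum>ds\<in>D. monom (1::nat) k)"
  by (simp only: monom_sum[symmetric]) simp

lemma Q_single:
  assumes a: "0 < a"
  shows "(\<Sum>c\<in>comps a. monom (Tr c N) (length c - 1)) = smult (Tr [a] N) ([:1,1:] ^ (size N - 1))"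
proof -
  have "(\<Sum>c\<in>comps a. monom (Tr c N) (length c - 1)) = (\<Sum>c\<in>comps a. \<Sum>ds\<in>DD c N. monom (1::nat) (length ds - 1))"
  proof (rule sum.cong[OF refl])
    fix c assume "c \<in> comps a"
    have "monom (Tr c N) (length c - 1) = (\<Sum>ds\<in>DD c N. monom (1::nat) (length c - 1))"
      unfolding Tr_def by (rule monom_card[OF finite_DD])
    also have "\<dots> = (\<Sum>ds\<in>DD c N. monom (1::nat) (length ds - 1))"
      by (rule sum.cong[OF refl]) (auto simp: DD_char)
    finally show "monom (Tr c N) (length c - 1) = (\<Sum>ds\<in>DD c N. monom (1::nat) (length ds - 1))" .
  qed
  also have "\<dots> = (\<Sum>ds\<in>(\<Union>c\<in>comps a. DD c N). monom (1::nat) (length ds - 1))"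
    by (rule sum.UNION_disjoint[symmetric]) (auto simp: finite_comps finite_DD DD_char)
  also have "(\<Union>c\<in>comps a. DD c N) = (\<Union>d\<in>{d\<in>comps a. mset d = N}. Grp d)"
  proof (intro set_eqI iffI)
    fix ds assume "ds \<in> (\<Union>c\<in>comps a. DD c N)"
    then obtain c where c: "c \<in> comps a" and h: "c = map sum_list ds" "\<forall>b\<in>set ds. \<forall>x\<in>set b. 0 < x" "mset (concat ds) = N"
      by (auto simp: DD_char)
    have "\<forall>b\<in>set ds. b \<noteq> []" using c h(1) by (auto simp: comps_char)
    moreover have "concat ds \<in> comps a" using c h by (auto simp: comps_char sum_list_concat_nat)
    ultimately show "ds \<in> (\<Union>d\<in>{d\<in>comps a. mset d = N}. Grp d)" using h(3) by (auto simp: Grp_def)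
  next
    fix ds assume "ds \<in> (\<Union>d\<in>{d\<in>comps a. mset d = N}. Grp d)"
    then obtain d where d: "d \<in> comps a" "mset d = N" and g: "concat ds = d" "\<forall>b\<in>set ds. b \<noteq> []"
      by (auto simp: Grp_def)
    have pos: "\<forall>b\<in>set ds. \<forall>x\<in>set b. 0 < x" using d(1) g(1) by (auto simp: comps_char)
    have "map sum_list ds \<in> comps a"
    proof -
      have "\<forall>x\<in>set (map sum_list ds). 0 < x"
      proof
        fix x assume "x \<in> set (map sum_list ds)"
        then obtain b where b: "b \<in> set ds" "x = sum_list b" by auto
        have "b \<noteq> []" using g(2) b(1) by blast
        then obtain y b' where "b = y # b'" by (meson list.exhaust)
        then show "0 < x" using b pos by auto
      qed
      moreover have "sum_list (map sum_list ds) = a" using d(1) g(1) by (simp add: comps_char sum_list_concat_nat[symmetric])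
      ultimately show ?thesis by (simp add: comps_char)
    qed
    moreover have "ds \<in> DD (map sum_list ds) N" using pos d g by (simp add: DD_char)
    ultimately show "ds \<in> (\<Union>c\<in>comps a. DD c N)" by blast
  qed
  also have "(\<Sum>ds\<in>(\<Union>d\<in>{d\<in>comps a. mset d = N}. Grp d). monom (1::nat) (length ds - 1))
      = (\<Sum>d\<in>{d\<in>comps a. mset d = N}. \<Sum>ds\<in>Grp d. monom (1::nat) (length ds - 1))"
  proof (rule sum.UNION_disjoint)
    show "finite {d\<in>comps a. mset d = N}" by (simp add: finite_comps)
    show "\<forall>d\<in>{d\<in>comps a. mset d = N}. finite (Grp d)"
      using Grp_poly comps_nonempty a by blast
    show "\<forall>d\<in>{d\<in>comps a. mset d = N}. \<forall>e\<in>{d\<in>comps a. mset d = N}. d \<noteq> e \<longrightarrow> Grp d \<inter> Grp e = {}"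
      by (auto simp: Grp_def)
  qed
  also have "\<dots> = (\<Sum>d\<in>{d\<in>comps a. mset d = N}. [:1,1:] ^ (size N - 1))"
  proof (rule sum.cong[OF refl])
    fix d assume d: "d \<in> {d\<in>comps a. mset d = N}"
    then have "d \<noteq> []" using comps_nonempty a by blast
    moreover have "length d = size N" using d by (metis (mono_tags, lifting) mem_Collect_eq size_mset)
    ultimately show "(\<Sum>ds\<in>Grp d. monom (1::nat) (length ds - 1)) = [:1,1:] ^ (size N - 1)"
      using Grp_poly by metis
  qed
  also have "\<dots> = smult (Tr [a] N) ([:1,1:] ^ (size N - 1))"
    by (simp only: Tr_single card_eq_sum smult_sum smult_1_left)
  finally show ?thesis .
qed


lemma main_poly:
  assumes "\<forall>x\<in>set \<mu>. 0 < x"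
  shows "(\<Sum>cs\<in>CS \<mu>. monom (Tr (concat cs) N) (length (concat cs) - length \<mu>))
         = smult (Tr \<mu> N) ([:1,1:] ^ (size N - length \<mu>))"
  using assms
proof (induction \<mu> arbitrary: N)
  case Nil
  have "CS [] = {[]}" by (auto simp: CS_def)
  then show ?case by (simp add: Tr_Nil monom_0 one_pCons)
next
  case (Cons a \<mu>)
  have a: "0 < a" and pos: "\<forall>x\<in>set \<mu>. 0 < x" using Cons.prems by auto
  let ?P = "[:1::nat,1:]"
  have inj: "inj_on (\<lambda>(c,cs). c#cs) (comps a \<times> CS \<mu>)" by (auto simp: inj_on_def)
  have "(\<Sum>cs\<in>CS (a#\<mu>). monom (Tr (concat cs) N) (length (concat cs) - length (a#\<mu>)))
      = (\<Sum>c\<in>comps a. \<Sum>cs\<in>CS \<mu>. monom (Tr (c @ concat cs) N) (length (c @ concat cs) - length (a#\<mu>)))"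
    unfolding CS_Cons sum.reindex[OF inj] sum.cartesian_product by (rule sum.cong) auto
  also have "\<dots> = (\<Sum>c\<in>comps a. \<Sum>cs\<in>CS \<mu>. \<Sum>N1\<in>{N1. N1 \<subseteq># N}.
        monom (Tr c N1) (length c - 1) * monom (Tr (concat cs) (N - N1)) (length (concat cs) - length \<mu>))"
  proof (intro sum.cong refl)
    fix c cs assume c: "c \<in> comps a" and cs: "cs \<in> CS \<mu>"
    have "1 \<le> length c" using comps_nonempty[OF c a] by (cases c) auto
    moreover have "length \<mu> \<le> length (concat cs)" using length_concat_CS[OF cs pos] .
    ultimately have e: "length (c @ concat cs) - length (a#\<mu>) = (length c - 1) + (length (concat cs) - length \<mu>)"
      by simp
    show "monom (Tr (c @ concat cs) N) (length (c @ concat cs) - length (a#\<mu>)) =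
       (\<Sum>N1\<in>{N1. N1 \<subseteq># N}. monom (Tr c N1) (length c - 1) * monom (Tr (concat cs) (N - N1)) (length (concat cs) - length \<mu>))"
      unfolding e Tr_append monom_sum mult_monom by simp
  qed
  also have "\<dots> = (\<Sum>N1\<in>{N1. N1 \<subseteq># N}. (\<Sum>c\<in>comps a. monom (Tr c N1) (length c - 1)) *
        (\<Sum>cs\<in>CS \<mu>. monom (Tr (concat cs) (N - N1)) (length (concat cs) - length \<mu>)))"
    by (simp add: sum_product sum.swap[of _ "{N1. N1 \<subseteq># N}"])
  also have "\<dots> = (\<Sum>N1\<in>{N1. N1 \<subseteq># N}. smult (Tr [a] N1) (?P ^ (size N1 - 1)) * smult (Tr \<mu> (N - N1)) (?P ^ (size (N - N1) - length \<mu>)))"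
    by (simp only: Q_single[OF a] Cons.IH[OF pos])
  also have "\<dots> = (\<Sum>N1\<in>{N1. N1 \<subseteq># N}. smult (Tr [a] N1 * Tr \<mu> (N - N1)) (?P ^ (size N - length (a#\<mu>))))"
  proof (rule sum.cong[OF refl])
    fix N1 assume N1: "N1 \<in> {N1. N1 \<subseteq># N}"
    show "smult (Tr [a] N1) (?P ^ (size N1 - 1)) * smult (Tr \<mu> (N - N1)) (?P ^ (size (N - N1) - length \<mu>))
        = smult (Tr [a] N1 * Tr \<mu> (N - N1)) (?P ^ (size N - length (a#\<mu>)))"
    proof (cases "Tr [a] N1 = 0 \<or> Tr \<mu> (N - N1) = 0")
      case True then show ?thesis by auto
    next
      case False
      then have "length [a] \<le> size N1" "length \<mu> \<le> size (N - N1)"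
        using Tr_size[of "[a]" N1] Tr_size[OF pos, of "N - N1"] a by auto
      moreover have "size N = size N1 + size (N - N1)"
        using N1 by (simp add: size_Diff_submset size_mset_mono)
      ultimately have "size N - length (a#\<mu>) = (size N1 - 1) + (size (N - N1) - length \<mu>)" by simp
      then show ?thesis by (simp add: power_add mult_ac)
    qed
  qed
  also have "\<dots> = smult (Tr (a#\<mu>) N) (?P ^ (size N - length (a#\<mu>)))"
    using Tr_append[of "[a]" \<mu> N] by (simp add: smult_sum)
  finally show ?case .
qed

lemma coeff_part:
  assumes "\<forall>x\<in>set \<mu>. 0 < x"
  shows "(\<Sum>cs\<in>{cs\<in>CS \<mu>. length (concat cs) = length \<mu> + s}. Tr (concat cs) N)
         = (size N - length \<mu> choose s) * Tr \<mu> N"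
proof -
  have "coeff (\<Sum>cs\<in>CS \<mu>. monom (Tr (concat cs) N) (length (concat cs) - length \<mu>)) s
      = coeff (smult (Tr \<mu> N) ([:1,1:] ^ (size N - length \<mu>))) s"
    by (simp only: main_poly[OF assms])
  moreover have "coeff (\<Sum>cs\<in>CS \<mu>. monom (Tr (concat cs) N) (length (concat cs) - length \<mu>)) s
      = (\<Sum>cs\<in>{cs\<in>CS \<mu>. length (concat cs) = length \<mu> + s}. Tr (concat cs) N)"
  proof -
    have "coeff (\<Sum>cs\<in>CS \<mu>. monom (Tr (concat cs) N) (length (concat cs) - length \<mu>)) s
        = (\<Sum>cs\<in>CS \<mu>. if length (concat cs) = length \<mu> + s then Tr (concat cs) N else 0)"
      unfolding coeff_sum coeff_monom
      by (rule sum.cong[OF refl]) (use length_concat_CS[OF _ assms] in force)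
    then show ?thesis by (simp add: sum.inter_filter finite_CS)
  qed
  moreover have "coeff (smult (Tr \<mu> N) ([:1,1:] ^ (size N - length \<mu>))) s = (size N - length \<mu> choose s) * Tr \<mu> N"
  proof (cases "s \<le> size N - length \<mu>")
    case True then show ?thesis by (simp add: coeff_linear_poly_power)
  next
    case False
    then have "coeff ([:1::nat,1:] ^ (size N - length \<mu>)) s = 0"
      by (intro coeff_eq_0) (use degree_linear_power[of "1::nat" "size N - length \<mu>"] in simp)
    then show ?thesis using False by simp
  qed
  ultimately show ?thesis by simp
qed


definition Parts :: "nat \<Rightarrow> nat list set" where
  "Parts n = {xs. is_partition n xs}"

lemma finite_Parts: "finite (Parts n)"
proof -
  have "Parts n \<subseteq> {xs. set xs \<subseteq> {0..n} \<and> length xs \<le> n}"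
  proof
    fix xs assume "xs \<in> Parts n"
    then have p: "\<forall>x\<in>set xs. 0 < x" and s: "sum_list xs = n"
      by (auto simp: Parts_def is_partition_def)
    have "set xs \<subseteq> {0..n}" using s member_le_sum_list by fastforce
    moreover have "length xs \<le> n" using length_le_sum_pos[OF p] s by simp
    ultimately show "xs \<in> {xs. set xs \<subseteq> {0..n} \<and> length xs \<le> n}" by simp
  qed
  then show ?thesis using finite_lists_length_le[of "{0..n}" n] finite_subset by blast
qed

lemma part1:
  assumes mu: "is_partition n \<mu>" and nu: "is_partition n \<nu>"
  shows "(\<Sum>\<mu>'\<in>{\<mu>'. is_partition n \<mu>' \<and> length \<mu>' = length \<mu> + s}. tcoef \<mu> \<mu>' * tcoef \<mu>' \<nu>)
         = (length \<nu> - length \<mu> choose s) * tcoef \<mu> \<nu>"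
proof -
  define L where "L = length \<mu> + s"
  define Pn where "Pn = {\<mu>'. is_partition n \<mu>' \<and> length \<mu>' = L}"
  define CSL where "CSL = {cs\<in>CS \<mu>. length (concat cs) = L}"
  define g where "g cs = rev (sort (concat cs))" for cs :: "nat list list"
  define N where "N = mset \<nu>"
  have pos: "\<forall>x\<in>set \<mu>. 0 < x" using mu by (simp add: is_partition_def)
  have finPn: "finite Pn" using finite_Parts[of n] unfolding Pn_def Parts_def
    by (rule finite_subset[rotated]) auto
  have finCSL: "finite CSL" unfolding CSL_def using finite_CS by simp
  have sorted_part: "sorted (rev xs)" if "is_partition n xs" for xs
    using that by (simp add: is_partition_def sorted_wrt_rev)
  have setq: "DD \<mu> (mset \<mu>') = {cs\<in>CSL. g cs = \<mu>'}" if m': "\<mu>' \<in> Pn" for \<mu>'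
  proof (intro set_eqI iffI)
    fix cs assume "cs \<in> DD \<mu> (mset \<mu>')"
    then have cs: "cs \<in> CS \<mu>" and m: "mset (concat cs) = mset \<mu>'" by (auto simp: DD_CS)
    have "length (concat cs) = L" using m m' unfolding Pn_def by (metis (mono_tags, lifting) mem_Collect_eq size_mset)
    moreover have "sort (concat cs) = rev \<mu>'"
      by (rule properties_for_sort) (use m m' sorted_part in \<open>auto simp: Pn_def\<close>)
    ultimately show "cs \<in> {cs\<in>CSL. g cs = \<mu>'}" using cs by (simp add: CSL_def g_def)
  next
    fix cs assume "cs \<in> {cs\<in>CSL. g cs = \<mu>'}"
    then have cs: "cs \<in> CS \<mu>" and gg: "rev (sort (concat cs)) = \<mu>'" by (auto simp: CSL_def g_def)
    have "mset \<mu>' = mset (concat cs)" using gg by (metis mset_rev mset_sort)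
    then show "cs \<in> DD \<mu> (mset \<mu>')" using cs by (simp add: DD_CS)
  qed
  have gim: "g ` CSL \<subseteq> Pn"
  proof
    fix y assume "y \<in> g ` CSL"
    then obtain cs where cs: "cs \<in> CS \<mu>" "length (concat cs) = L" and y: "y = rev (sort (concat cs))"
      by (auto simp: CSL_def g_def)
    have h: "\<mu> = map sum_list cs" "\<forall>b\<in>set cs. \<forall>x\<in>set b. 0 < x" using cs(1) by (auto simp: CS_char)
    have "sorted_wrt (\<ge>) y" unfolding y by (simp add: sorted_wrt_rev)
    moreover have "\<forall>x\<in>set y. 0 < x" unfolding y using h(2) by auto
    moreover have "sum_list y = n"
    proof -
      have "sum_list y = sum_list (concat cs)" unfolding y by (metis mset_rev mset_sort sum_mset_sum_list)
      also have "\<dots> = sum_list \<mu>" using h(1) by (simp add: sum_list_concat_nat)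
      finally show ?thesis using mu by (simp add: is_partition_def)
    qed
    moreover have "length y = L" using cs(2) y by simp
    ultimately show "y \<in> Pn" by (simp add: Pn_def is_partition_def)
  qed
  have "(\<Sum>\<mu>'\<in>Pn. tcoef \<mu> \<mu>' * tcoef \<mu>' \<nu>) = (\<Sum>\<mu>'\<in>Pn. \<Sum>cs\<in>{cs\<in>CSL. g cs = \<mu>'}. Tr (concat cs) N)"
  proof (rule sum.cong[OF refl])
    fix \<mu>' assume m': "\<mu>' \<in> Pn"
    have "tcoef \<mu> \<mu>' * tcoef \<mu>' \<nu> = (\<Sum>cs\<in>DD \<mu> (mset \<mu>'). Tr \<mu>' N)"
      by (simp add: tcoef_Tr Tr_def N_def)
    also have "\<dots> = (\<Sum>cs\<in>DD \<mu> (mset \<mu>'). Tr (concat cs) N)"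
      by (rule sum.cong[OF refl]) (auto simp: DD_CS intro: Tr_perm)
    finally show "tcoef \<mu> \<mu>' * tcoef \<mu>' \<nu> = (\<Sum>cs\<in>{cs\<in>CSL. g cs = \<mu>'}. Tr (concat cs) N)"
      using setq[OF m'] by simp
  qed
  also have "\<dots> = (\<Sum>cs\<in>CSL. Tr (concat cs) N)"
    by (rule sum.group[OF finCSL finPn gim])
  also have "\<dots> = (size N - length \<mu> choose s) * Tr \<mu> N"
    unfolding CSL_def L_def by (rule coeff_part[OF pos])
  finally show ?thesis by (simp add: Pn_def L_def N_def tcoef_Tr)
qed


definition SetC :: "nat \<Rightarrow> nat list \<Rightarrow> nat list \<Rightarrow> nat list list set" where
  "SetC n \<mu> ss = {ms. length ms = length ss \<and>
     (\<forall>i<length ss. is_partition n (ms ! i) \<and>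
        length (ms ! i) = length (if i = 0 then \<mu> else ms ! (i - 1)) + ss ! i)}"

lemma SetC_Nil: "SetC n \<mu> [] = {[]}"
  by (auto simp: SetC_def)

lemma SetC_Cons: "SetC n \<mu> (s#ss) =
  (\<lambda>(m,ms). m#ms) ` (SIGMA m:{m. is_partition n m \<and> length m = length \<mu> + s}. SetC n m ss)"
proof (intro set_eqI iffI)
  fix x assume "x \<in> SetC n \<mu> (s#ss)"
  then have l: "length x = Suc (length ss)"
    and h: "\<forall>i<Suc (length ss). is_partition n (x ! i) \<and>
        length (x ! i) = length (if i = 0 then \<mu> else x ! (i - 1)) + (s#ss) ! i"
    by (auto simp: SetC_def)
  then obtain m ms where x: "x = m # ms" by (cases x) auto
  have h0: "is_partition n m \<and> length m = length \<mu> + s" using h[rule_format, of 0] x by simp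
  have "ms \<in> SetC n m ss"
    unfolding SetC_def
  proof (intro CollectI conjI allI impI)
    show "length ms = length ss" using l x by simp
    fix i assume i: "i < length ss"
    have hh: "is_partition n (x ! Suc i) \<and>
        length (x ! Suc i) = length (if Suc i = 0 then \<mu> else x ! (Suc i - 1)) + (s#ss) ! Suc i"
      using h i by blast
    show "is_partition n (ms ! i)" using hh x by simp
    show "length (ms ! i) = length (if i = 0 then m else ms ! (i - 1)) + ss ! i"
      using hh x by (cases i) auto
  qed
  then show "x \<in> (\<lambda>(m,ms). m#ms) ` (SIGMA m:{m. is_partition n m \<and> length m = length \<mu> + s}. SetC n m ss)"
    using h0 x by force
next
  fix x assume "x \<in> (\<lambda>(m,ms). m#ms) ` (SIGMA m:{m. is_partition n m \<and> length m = length \<mu> + s}. SetC n m ss)"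
  then obtain m ms where x: "x = m # ms" and m: "is_partition n m" "length m = length \<mu> + s"
    and ms: "ms \<in> SetC n m ss" by auto
  from ms have l: "length ms = length ss" and h: "\<forall>i<length ss. is_partition n (ms ! i) \<and>
        length (ms ! i) = length (if i = 0 then m else ms ! (i - 1)) + ss ! i"
    by (auto simp: SetC_def)
  show "x \<in> SetC n \<mu> (s#ss)"
    unfolding SetC_def
  proof (intro CollectI conjI allI impI)
    show "length x = length (s#ss)" using l x by simp
    fix i assume i: "i < length (s#ss)"
    show "is_partition n (x ! i)"
    proof (cases i)
      case 0 then show ?thesis using x m by simp
    next
      case (Suc j) then show ?thesis using x h i by simp
    qed
    show "length (x ! i) = length (if i = 0 then \<mu> else x ! (i - 1)) + (s#ss) ! i"
    proof (cases i)
      case 0 then show ?thesis using x m by simp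
    next
      case (Suc j)
      then have "j < length ss" using i by simp
      then show ?thesis using x h Suc by (cases j) auto
    qed
  qed
qed

lemma finite_SetC: "finite (SetC n \<mu> ss)"
proof -
  have "SetC n \<mu> ss \<subseteq> {ms. set ms \<subseteq> Parts n \<and> length ms = length ss}"
    by (auto simp: SetC_def Parts_def in_set_conv_nth)
  then show ?thesis using finite_lists_length_eq[OF finite_Parts] finite_subset by blast
qed

lemma part2:
  "\<forall>\<mu>. is_partition n \<mu> \<longrightarrow> length \<mu> \<le> length \<nu> \<longrightarrow> sum_list ss \<le> length \<nu> - length \<mu> \<longrightarrow>
     real (\<Sum>ms\<in>SetC n \<mu> ss. tchain \<mu> ms \<nu>)
     = real (fact (length \<nu> - length \<mu>)) /
         (real (prod_list (map fact ss)) * real (fact (length \<nu> - length \<mu> - sum_list ss)))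
       * real (tcoef \<mu> \<nu>)" if nu: "is_partition n \<nu>"
proof (induction ss)
  case Nil
  show ?case by (simp add: SetC_Nil)
next
  case (Cons s ss)
  show ?case
  proof (intro allI impI)
    fix \<mu> assume mu: "is_partition n \<mu>" and le: "length \<mu> \<le> length \<nu>"
      and sl: "sum_list (s#ss) \<le> length \<nu> - length \<mu>"
    define d where "d = length \<nu> - length \<mu>"
    define Pn where "Pn = {m. is_partition n m \<and> length m = length \<mu> + s}"
    define C' where "C' = real (fact (d - s)) / (real (prod_list (map fact ss)) * real (fact (d - s - sum_list ss)))"
    have sd: "s \<le> d" using sl d_def by simp
    have finPn: "finite Pn" using finite_Parts[of n] unfolding Pn_def Parts_def
      by (rule finite_subset[rotated]) auto
    have inj: "inj_on (\<lambda>(m,ms). m#ms) (SIGMA m:Pn. SetC n m ss)" by (auto simp: inj_on_def)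
    have "(\<Sum>ms\<in>SetC n \<mu> (s#ss). tchain \<mu> ms \<nu>) = (\<Sum>m\<in>Pn. \<Sum>ms\<in>SetC n m ss. tchain \<mu> (m#ms) \<nu>)"
      unfolding SetC_Cons Pn_def[symmetric] sum.reindex[OF inj]
      by (subst sum.Sigma[OF finPn]) (auto simp: finite_SetC intro!: sum.cong)
    also have "\<dots> = (\<Sum>m\<in>Pn. tcoef \<mu> m * (\<Sum>ms\<in>SetC n m ss. tchain m ms \<nu>))"
      by (simp add: sum_distrib_left)
    finally have e1: "real (\<Sum>ms\<in>SetC n \<mu> (s#ss). tchain \<mu> ms \<nu>)
        = (\<Sum>m\<in>Pn. real (tcoef \<mu> m) * real (\<Sum>ms\<in>SetC n m ss. tchain m ms \<nu>))" by simp
    also have "\<dots> = (\<Sum>m\<in>Pn. real (tcoef \<mu> m) * (C' * real (tcoef m \<nu>)))"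
    proof (rule sum.cong[OF refl])
      fix m assume m: "m \<in> Pn"
      then have mp: "is_partition n m" and lm: "length m = length \<mu> + s" by (auto simp: Pn_def)
      have eq: "length \<nu> - length m = d - s" using lm d_def by simp
      have "length m \<le> length \<nu>" using lm sd d_def le by simp
      moreover have "sum_list ss \<le> length \<nu> - length m" using lm sl d_def by simp
      ultimately have ih: "real (\<Sum>ms\<in>SetC n m ss. tchain m ms \<nu>)
          = real (fact (length \<nu> - length m)) /
         (real (prod_list (map fact ss)) * real (fact (length \<nu> - length m - sum_list ss)))
       * real (tcoef m \<nu>)"
        using Cons.IH mp by blast
      show "real (tcoef \<mu> m) * real (\<Sum>ms\<in>SetC n m ss. tchain m ms \<nu>) = real (tcoef \<mu> m) * (C' * real (tcoef m \<nu>))"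
        unfolding ih eq C'_def ..
    qed
    also have "\<dots> = C' * real (\<Sum>m\<in>Pn. tcoef \<mu> m * tcoef m \<nu>)"
      by (simp add: sum_distrib_left mult_ac)
    also have "(\<Sum>m\<in>Pn. tcoef \<mu> m * tcoef m \<nu>) = (d choose s) * tcoef \<mu> \<nu>"
      unfolding Pn_def d_def by (rule part1[OF mu nu])
    also have "C' * real ((d choose s) * tcoef \<mu> \<nu>) =
        real (fact d) / (real (prod_list (map fact (s#ss))) * real (fact (d - sum_list (s#ss)))) * real (tcoef \<mu> \<nu>)"
    proof -
      have b: "real (d choose s) = fact d / (fact s * fact (d - s))" using binomial_fact[OF sd] by simp
      have "d - sum_list (s#ss) = d - s - sum_list ss" by simp
      moreover have "real (prod_list (map fact ss)) \<noteq> 0"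
        by (induction ss) auto
      ultimately show ?thesis unfolding C'_def
        by (simp add: b field_simps)
    qed
    finally show "real (\<Sum>ms\<in>SetC n \<mu> (s#ss). tchain \<mu> ms \<nu>) =
       real (fact (length \<nu> - length \<mu>)) /
         (real (prod_list (map fact (s#ss))) * real (fact (length \<nu> - length \<mu> - sum_list (s#ss))))
       * real (tcoef \<mu> \<nu>)" unfolding d_def .
  qed
qed

theorem lemma6p1:
  fixes n :: nat and \<mu> \<nu> :: "nat list"
  assumes "is_partition n \<mu>" and "is_partition n \<nu>" and "length \<mu> \<le> length \<nu>"
  shows "(\<forall>s. s \<le> length \<nu> - length \<mu> \<longrightarrow>
           (\<Sum>\<mu>'\<in>{\<mu>'. is_partition n \<mu>' \<and> length \<mu>' = length \<mu> + s}.
              tcoef \<mu> \<mu>' * tcoef \<mu>' \<nu>)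
           = (length \<nu> - length \<mu> choose s) * tcoef \<mu> \<nu>)
       \<and> (\<forall>ss :: nat list. sum_list ss \<le> length \<nu> - length \<mu> \<longrightarrow>
           real (\<Sum>ms\<in>{ms. length ms = length ss \<and>
                   (\<forall>i<length ss. is_partition n (ms ! i) \<and>
                      length (ms ! i) = length (if i = 0 then \<mu> else ms ! (i - 1)) + ss ! i)}.
                 tchain \<mu> ms \<nu>)
           = real (fact (length \<nu> - length \<mu>)) /
               (real (prod_list (map fact ss)) * real (fact (length \<nu> - length \<mu> - sum_list ss)))
             * real (tcoef \<mu> \<nu>))"
proof (intro conjI allI impI)
  fix s :: nat
  show "(\<Sum>\<mu>'\<in>{\<mu>'. is_partition n \<mu>' \<and> length \<mu>' = length \<mu> + s}. tcoef \<mu> \<mu>' * tcoef \<mu>' \<nu>)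
           = (length \<nu> - length \<mu> choose s) * tcoef \<mu> \<nu>"
    by (rule part1[OF assms(1,2)])
next
  fix ss :: "nat list"
  assume "sum_list ss \<le> length \<nu> - length \<mu>"
  then show "real (\<Sum>ms\<in>{ms. length ms = length ss \<and>
                   (\<forall>i<length ss. is_partition n (ms ! i) \<and>
                      length (ms ! i) = length (if i = 0 then \<mu> else ms ! (i - 1)) + ss ! i)}.
                 tchain \<mu> ms \<nu>)
           = real (fact (length \<nu> - length \<mu>)) /
               (real (prod_list (map fact ss)) * real (fact (length \<nu> - length \<mu> - sum_list ss)))
             * real (tcoef \<mu> \<nu>)"
    using part2[OF assms(2), of ss] assms(1,3) unfolding SetC_def by blast
qed

end
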